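(* Let $R$ be a commutative semiring, $v:R\to M$ a surjective m-valuation with support $\mathfrak q:=v^{-1}(0)$, and $U^0(v)$ the supertropical monoid constructed below. (i) The map $\varphi_v^0:R\to U^0(v)$ with $\varphi_v^0(a)=a$ for $a\in R\setminus\mathfrak q$ and $\varphi_v^0(a)=0_M$ for $a\in\mathfrak q$ is a surjective m-supervaluation covering $v$. (ii) $\varphi_v^0$ dominates every other m-supervaluation covering $v$.
   Context: A bipotent semiring $M$ is a commutative monoid with absorbing $0$ and a total order compatible with multiplication with $0$ least; $x+y=\max(x,y)$. An m-valuation on a semiring $R$ is a multiplicative map $v:R\to M$ to a bipotent semiring with $v(0)=0$, $v(1)=1$, $v(a+b)\le\max(v(a),v(b))$. A supertropical monoid is a commutative monoid $U$ with absorbing $0$ and idempotent $e$ with $ex=0\Rightarrow x=0$ and a total order on $eU$ making it a bipotent semiring. An m-supervaluation is a map $\varphi:R\to U$ to a supertropical monoid with $\varphi(0)=0$, $\varphi(1)=1$, $\varphi(ab)=\varphi(a)\varphi(b)$, $e\varphi(a+b)\le\max(e\varphi(a),e\varphi(b))$; it covers $v$ if $eU=M$ and $e\varphi=v$; it is surjective if $U=\varphi(R)\cup e\varphi(R)$. For m-supervaluations $\varphi:R\to U$, $\psi:R\to V$, $\varphi$ dominates $\psi$ if for all $a,b\in R$: $\varphi(a)=\varphi(b)\Rightarrow\psi(a)=\psi(b)$; $e\varphi(a)\le e\varphi(b)\Rightarrow e\psi(a)\le e\psi(b)$; $\varphi(a)\in eU\Rightarrow\psi(a)\in eV$. Construction: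 $U^0(v)$ is the disjoint union $(R\setminus\mathfrak q)\sqcup M$ with multiplication $x\odot y=xy$ (product in $R$) if $x,y,xy\in R\setminus\mathfrak q$; $x\odot y=0_M$ if $x,y\in R\setminus\mathfrak q$, $xy\in\mathfrak q$; $x\odot y=v(x)y$ if $x\in R\setminus\mathfrak q$, $y\in M$ (and symmetrically); $x\odot y=xy$ (product in $M$) if $x,y\in M$; unit $1_R$, absorbing element $0_M$, distinguished idempotent $e:=1_M$, with the given ordering on $eU^0(v)=M$. *)

theory Defs
  imports "HOL-Algebra.Group"
begin

text \<open>Addition is x + y = max x y and is not
needed explicitly.\<close>

definition bipotent_semiring :: "'m::{comm_monoid_mult,zero,linorder} itself \<Rightarrow> bool" where
  "bipotent_semiring _ \<longleftrightarrow>
     (\<forall>x::'m. 0 * x = 0 \<and> x * 0 = 0 \<and> 0 \<le> x) \<and>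
     (\<forall>x y z::'m. x \<le> y \<longrightarrow> x * z \<le> y * z)"

definition m_valuation :: "('r::comm_semiring_1 \<Rightarrow> 'm::{comm_monoid_mult,zero,linorder}) \<Rightarrow> bool" where
  "m_valuation v \<longleftrightarrow>
     v 0 = 0 \<and> v 1 = 1 \<and> (\<forall>a b. v (a * b) = v a * v b) \<and>
     (\<forall>a b. v (a + b) \<le> max (v a) (v b))"

record 'a st_monoid = "'a monoid" +
  st_zero :: 'a
  st_e :: 'a
  st_le :: "'a \<Rightarrow> 'a \<Rightarrow> bool"

definition ghost :: "('a, 'b) st_monoid_scheme \<Rightarrow> 'a set" where
  "ghost U = (\<lambda>x. st_e U \<otimes>\<^bsub>U\<^esub> x) ` carrier U"

definition st_max :: "('a, 'b) st_monoid_scheme \<Rightarrow> 'a \<Rightarrow> 'a \<Rightarrow> 'a" where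
  "st_max U x y = (if st_le U x y then y else x)"

definition supertropical_monoid :: "('a, 'b) st_monoid_scheme \<Rightarrow> bool" where
  "supertropical_monoid U \<longleftrightarrow>
     comm_monoid U \<and>
     st_zero U \<in> carrier U \<and>
     (\<forall>x\<in>carrier U. st_zero U \<otimes>\<^bsub>U\<^esub> x = st_zero U) \<and>
     st_e U \<in> carrier U \<and> st_e U \<otimes>\<^bsub>U\<^esub> st_e U = st_e U \<and>
     (\<forall>x\<in>carrier U. st_e U \<otimes>\<^bsub>U\<^esub> x = st_zero U \<longrightarrow> x = st_zero U) \<and>
     \<comment> \<open>total order on eU making eU a bipotent semiring\<close>
     (\<forall>x\<in>ghost U. st_le U x x) \<and>
     (\<forall>x\<in>ghost U. \<forall>y\<in>ghost U. st_le U x y \<and> st_le U y x \<longrightarrow> x = y) \<and>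
     (\<forall>x\<in>ghost U. \<forall>y\<in>ghost U. \<forall>z\<in>ghost U. st_le U x y \<and> st_le U y z \<longrightarrow> st_le U x z) \<and>
     (\<forall>x\<in>ghost U. \<forall>y\<in>ghost U. st_le U x y \<or> st_le U y x) \<and>
     (\<forall>x\<in>ghost U. \<forall>y\<in>ghost U. \<forall>z\<in>ghost U.
        st_le U x y \<longrightarrow> st_le U (x \<otimes>\<^bsub>U\<^esub> z) (y \<otimes>\<^bsub>U\<^esub> z)) \<and>
     (\<forall>x\<in>ghost U. st_le U (st_zero U) x)"

definition m_supervaluation ::
  "('a, 'b) st_monoid_scheme \<Rightarrow> ('r::comm_semiring_1 \<Rightarrow> 'a) \<Rightarrow> bool" where
  "m_supervaluation U \<phi> \<longleftrightarrow>
     supertropical_monoid U \<and>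
     (\<forall>a. \<phi> a \<in> carrier U) \<and>
     \<phi> 0 = st_zero U \<and> \<phi> 1 = \<one>\<^bsub>U\<^esub> \<and>
     (\<forall>a b. \<phi> (a * b) = \<phi> a \<otimes>\<^bsub>U\<^esub> \<phi> b) \<and>
     (\<forall>a b. st_le U (st_e U \<otimes>\<^bsub>U\<^esub> \<phi> (a + b))
                  (st_max U (st_e U \<otimes>\<^bsub>U\<^esub> \<phi> a) (st_e U \<otimes>\<^bsub>U\<^esub> \<phi> b)))"

text \<open>Since M is a type, the identification of M with eU is given
by an explicit isomorphism j : M -> eU of bipotent semirings (bijective onto eU,
multiplicative, 1 to e, 0 to 0, order preserving and reflecting), and e phi = j o v.\<close>

definition covers ::
  "('a, 'b) st_monoid_scheme \<Rightarrow> ('r::comm_semiring_1 \<Rightarrow> 'a) \<Rightarrow> ('m \<Rightarrow> 'a)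
     \<Rightarrow> ('r \<Rightarrow> 'm::{comm_monoid_mult,zero,linorder}) \<Rightarrow> bool" where
  "covers U \<phi> j v \<longleftrightarrow>
     bij_betw j UNIV (ghost U) \<and>
     (\<forall>x y. j (x * y) = j x \<otimes>\<^bsub>U\<^esub> j y) \<and>
     j 1 = st_e U \<and> j 0 = st_zero U \<and>
     (\<forall>x y. x \<le> y \<longleftrightarrow> st_le U (j x) (j y)) \<and>
     (\<forall>a. st_e U \<otimes>\<^bsub>U\<^esub> \<phi> a = j (v a))"

definition surjective_sv :: "('a, 'b) st_monoid_scheme \<Rightarrow> ('r \<Rightarrow> 'a) \<Rightarrow> bool" where
  "surjective_sv U \<phi> \<longleftrightarrow>
     carrier U = range \<phi> \<union> range (\<lambda>a. st_e U \<otimes>\<^bsub>U\<^esub> \<phi> a)"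

definition dominates ::
  "('a, 'b) st_monoid_scheme \<Rightarrow> ('r \<Rightarrow> 'a) \<Rightarrow> ('c, 'd) st_monoid_scheme \<Rightarrow> ('r \<Rightarrow> 'c) \<Rightarrow> bool" where
  "dominates U \<phi> V \<psi> \<longleftrightarrow>
     (\<forall>a b. \<phi> a = \<phi> b \<longrightarrow> \<psi> a = \<psi> b) \<and>
     (\<forall>a b. st_le U (st_e U \<otimes>\<^bsub>U\<^esub> \<phi> a) (st_e U \<otimes>\<^bsub>U\<^esub> \<phi> b) \<longrightarrow>
            st_le V (st_e V \<otimes>\<^bsub>V\<^esub> \<psi> a) (st_e V \<otimes>\<^bsub>V\<^esub> \<psi> b)) \<and>
     (\<forall>a. \<phi> a \<in> ghost U \<longrightarrow> \<psi> a \<in> ghost V)"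

text \<open>Elements of R \ q are Inl a (v a ~= 0), elements of M are Inr m.\<close>

definition phi0 :: "('r::comm_semiring_1 \<Rightarrow> 'm::{comm_monoid_mult,zero,linorder}) \<Rightarrow> 'r \<Rightarrow> 'r + 'm" where
  "phi0 v a = (if v a = 0 then Inr 0 else Inl a)"

fun u0_mult :: "('r::comm_semiring_1 \<Rightarrow> 'm::{comm_monoid_mult,zero,linorder})
                  \<Rightarrow> 'r + 'm \<Rightarrow> 'r + 'm \<Rightarrow> 'r + 'm" where
  "u0_mult v (Inl a) (Inl b) = (if v (a * b) = 0 then Inr 0 else Inl (a * b))"
| "u0_mult v (Inl a) (Inr m) = Inr (v a * m)"
| "u0_mult v (Inr m) (Inl b) = Inr (m * v b)"
| "u0_mult v (Inr m) (Inr n) = Inr (m * n)"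

fun u0_le :: "'r + 'm::linorder \<Rightarrow> 'r + 'm \<Rightarrow> bool" where
  "u0_le (Inr m) (Inr n) = (m \<le> n)"
| "u0_le _ _ = False"

definition U0 :: "('r::comm_semiring_1 \<Rightarrow> 'm::{comm_monoid_mult,zero,linorder}) \<Rightarrow> ('r + 'm) st_monoid" where
  "U0 v = \<lparr> carrier = Inl ` {a. v a \<noteq> 0} \<union> range Inr,
            mult = u0_mult v,
            one = phi0 v 1,
            st_zero = Inr 0,
            st_e = Inr 1,
            st_le = u0_le \<rparr>"

end

theory Submission
  imports Defs
begin

lemma u0_assoc:
  fixes v :: "'r::comm_semiring_1 \<Rightarrow> 'm::{comm_monoid_mult,zero,linorder}"
  assumes B: "bipotent_semiring TYPE('m)" and V: "m_valuation v"
  shows "u0_mult v (u0_mult v x y) z = u0_mult v x (u0_mult v y z)"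
proof -
  have z: "\<And>x::'m. 0 * x = 0" "\<And>x::'m. x * 0 = 0" using B unfolding bipotent_semiring_def by auto
  have vm: "\<And>a b. v (a * b) = v a * v b" using V unfolding m_valuation_def by auto
  show ?thesis
    apply (cases x; cases y; cases z)
    apply (auto simp: vm z mult.assoc[symmetric])
    apply (metis mult.assoc mult.commute z)+
    done
qed

lemma u0_comm:
  fixes v :: "'r::comm_semiring_1 \<Rightarrow> 'm::{comm_monoid_mult,zero,linorder}"
  shows "u0_mult v x y = u0_mult v y x"
  by (cases x; cases y) (auto simp: mult.commute)

lemma ghost_U0: "ghost (U0 v) = range Inr"
proof -
  have "ghost (U0 v) = (\<lambda>x. u0_mult v (Inr 1) x) ` (Inl ` {a. v a \<noteq> 0} \<union> range Inr)"
    unfolding ghost_def U0_def by simp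
  also have "\<dots> = range Inr"
  proof
    show "range Inr \<subseteq> (\<lambda>x. u0_mult v (Inr 1) x) ` (Inl ` {a. v a \<noteq> 0} \<union> range Inr)"
    proof
      fix y assume "y \<in> (range Inr :: ('a + 'b) set)"
      then obtain m where "y = Inr m" by auto
      then have "y = u0_mult v (Inr 1) (Inr m)" by simp
      then show "y \<in> (\<lambda>x. u0_mult v (Inr 1) x) ` (Inl ` {a. v a \<noteq> 0} \<union> range Inr)" by blast
    qed
  qed auto
  finally show ?thesis .
qed

theorem theorem6p4:
  fixes v :: "'r::comm_semiring_1 \<Rightarrow> 'm::{comm_monoid_mult,zero,linorder}"
  assumes "bipotent_semiring TYPE('m)"
    and "m_valuation v"
    and "surj v"
  shows "m_supervaluation (U0 v) (phi0 v) \<and> surjective_sv (U0 v) (phi0 v)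
           \<and> covers (U0 v) (phi0 v) Inr v
         \<and> (\<forall>(V :: 'v st_monoid) (\<psi> :: 'r \<Rightarrow> 'v) (j :: 'm \<Rightarrow> 'v).
              m_supervaluation V \<psi> \<and> covers V \<psi> j v \<longrightarrow>
              dominates (U0 v) (phi0 v) V \<psi>)"
proof -
  note B = assms(1) and Vv = assms(2)
  have z: "\<And>x::'m. 0 * x = 0" "\<And>x::'m. x * 0 = 0" "\<And>x::'m. 0 \<le> x"
    and mono: "\<And>x y z::'m. x \<le> y \<Longrightarrow> x * z \<le> y * z"
    using B unfolding bipotent_semiring_def by auto
  have vm: "\<And>a b. v (a * b) = v a * v b" and v0: "v 0 = 0" and v1: "v 1 = 1"
    and vadd: "\<And>a b. v (a + b) \<le> max (v a) (v b)"
    using Vv unfolding m_valuation_def by auto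
  let ?U = "U0 v"
  have carr: "carrier ?U = Inl ` {a. v a \<noteq> 0} \<union> range Inr" by (simp add: U0_def)
  have mult: "\<And>x y. x \<otimes>\<^bsub>?U\<^esub> y = u0_mult v x y" by (simp add: U0_def)
  have one: "\<one>\<^bsub>?U\<^esub> = phi0 v 1" by (simp add: U0_def)
  have zer: "st_zero ?U = Inr 0" and e: "st_e ?U = Inr 1" and le: "st_le ?U = u0_le"
    by (simp_all add: U0_def)
  have gh: "ghost ?U = range Inr" by (rule ghost_U0)
  have ephi: "\<And>a. u0_mult v (Inr 1) (phi0 v a) = Inr (v a)"
    by (auto simp: phi0_def z)
  have phicar: "\<And>a. phi0 v a \<in> carrier ?U" by (auto simp: carr phi0_def)
  have cm: "comm_monoid ?U"
  proof (rule comm_monoidI)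
    fix x y assume "x \<in> carrier ?U" "y \<in> carrier ?U"
    then show "x \<otimes>\<^bsub>?U\<^esub> y \<in> carrier ?U"
      by (cases x; cases y) (auto simp: carr mult)
  next
    show "\<one>\<^bsub>?U\<^esub> \<in> carrier ?U" using phicar one by simp
  next
    fix x y z show "x \<otimes>\<^bsub>?U\<^esub> y \<otimes>\<^bsub>?U\<^esub> z = x \<otimes>\<^bsub>?U\<^esub> (y \<otimes>\<^bsub>?U\<^esub> z)"
      by (simp add: mult u0_assoc[OF B Vv])
  next
    fix x assume "x \<in> carrier ?U"
    have triv: "(1::'m) = 0 \<Longrightarrow> m = 0" for m :: 'm by (metis mult.right_neutral z(2))
    show "\<one>\<^bsub>?U\<^esub> \<otimes>\<^bsub>?U\<^esub> x = x" using \<open>x \<in> carrier ?U\<close>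
      by (cases x) (auto simp: carr mult one phi0_def v1 z dest: triv)
  next
    fix x y show "x \<otimes>\<^bsub>?U\<^esub> y = y \<otimes>\<^bsub>?U\<^esub> x" by (simp add: mult u0_comm)
  qed
  have st: "supertropical_monoid ?U"
    unfolding supertropical_monoid_def
    apply (intro conjI cm)
    using z mono
    by (auto simp: carr mult zer e le gh)
  have msv: "m_supervaluation ?U (phi0 v)"
    unfolding m_supervaluation_def
  proof (intro conjI st allI phicar)
    show "phi0 v 0 = st_zero ?U" by (simp add: phi0_def v0 zer)
    show "phi0 v 1 = \<one>\<^bsub>?U\<^esub>" by (simp add: one)
  next
    fix a b show "phi0 v (a * b) = phi0 v a \<otimes>\<^bsub>?U\<^esub> phi0 v b"
      by (auto simp: phi0_def mult vm z)
  next
    fix a b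
    show "st_le ?U (st_e ?U \<otimes>\<^bsub>?U\<^esub> phi0 v (a + b))
            (st_max ?U (st_e ?U \<otimes>\<^bsub>?U\<^esub> phi0 v a) (st_e ?U \<otimes>\<^bsub>?U\<^esub> phi0 v b))"
      using vadd[of a b]
      by (auto simp: e mult ephi le st_max_def max_def split: if_splits)
  qed
  have ssv: "surjective_sv ?U (phi0 v)"
    unfolding surjective_sv_def
  proof
    show "carrier ?U \<subseteq> range (phi0 v) \<union> range (\<lambda>a. st_e ?U \<otimes>\<^bsub>?U\<^esub> phi0 v a)"
    proof
      fix x assume "x \<in> carrier ?U"
      then show "x \<in> range (phi0 v) \<union> range (\<lambda>a. st_e ?U \<otimes>\<^bsub>?U\<^esub> phi0 v a)"
      proof (cases x)
        case (Inl a) then show ?thesis using \<open>x \<in> carrier ?U\<close>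
          by (auto simp: carr phi0_def image_iff intro!: exI[of _ a])
      next
        case (Inr m)
        obtain a where "m = v a" using assms(3) by (metis surjD)
        then show ?thesis using Inr by (auto simp: e mult ephi)
      qed
    qed
    show "range (phi0 v) \<union> range (\<lambda>a. st_e ?U \<otimes>\<^bsub>?U\<^esub> phi0 v a) \<subseteq> carrier ?U"
      using phicar by (auto simp: e mult ephi carr)
  qed
  have cov: "covers ?U (phi0 v) Inr v"
    unfolding covers_def
    by (auto simp: gh mult e zer le ephi bij_betw_def)
  have dom: "dominates ?U (phi0 v) V \<psi>" if h: "m_supervaluation V \<psi> \<and> covers V \<psi> j v"
    for V :: "'v st_monoid" and \<psi> j
  proof -
    have stV: "supertropical_monoid V" and psic: "\<And>a. \<psi> a \<in> carrier V"
      using h unfolding m_supervaluation_def by auto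
    have ez: "\<And>x. x \<in> carrier V \<Longrightarrow> st_e V \<otimes>\<^bsub>V\<^esub> x = st_zero V \<Longrightarrow> x = st_zero V"
      using stV unfolding supertropical_monoid_def by blast
    have jb: "bij_betw j UNIV (ghost V)" and j0: "j 0 = st_zero V"
      and jle: "\<And>x y. x \<le> y \<longleftrightarrow> st_le V (j x) (j y)"
      and jv: "\<And>a. st_e V \<otimes>\<^bsub>V\<^esub> \<psi> a = j (v a)"
      using h unfolding covers_def by auto
    have key: "\<And>a. v a = 0 \<Longrightarrow> \<psi> a = st_zero V"
      using ez psic jv j0 by metis
    have j0g: "st_zero V \<in> ghost V" using bij_betw_apply[OF jb, of 0] j0 by simp
    show ?thesis
      unfolding dominates_def
    proof (intro conjI allI impI)
      fix a b assume "phi0 v a = phi0 v b"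
      then show "\<psi> a = \<psi> b" using key by (auto simp: phi0_def split: if_splits)
    next
      fix a b assume "st_le ?U (st_e ?U \<otimes>\<^bsub>?U\<^esub> phi0 v a) (st_e ?U \<otimes>\<^bsub>?U\<^esub> phi0 v b)"
      then have "v a \<le> v b" by (simp add: e mult ephi le)
      then show "st_le V (st_e V \<otimes>\<^bsub>V\<^esub> \<psi> a) (st_e V \<otimes>\<^bsub>V\<^esub> \<psi> b)"
        using jle jv by simp
    next
      fix a assume "phi0 v a \<in> ghost ?U"
      then have "v a = 0" by (auto simp: gh phi0_def split: if_splits)
      then show "\<psi> a \<in> ghost V" using key j0g by simp
    qed
  qed
  show ?thesis using msv ssv cov dom by blast
qed

end
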